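(* Let $\Lambda$ be a strongly connected finite $k$-graph. Then $\Lambda$ is aperiodic if and only if $\operatorname{Per}\Lambda=\{0\}$.
   Context: A $k$-graph is a countable category $\Lambda$ with a functor $d:\Lambda\to\mathbb{N}^k$ such that whenever $d(\lambda)=m+n$ there are unique $\mu,\nu$ with $d(\mu)=m$, $d(\nu)=n$, $\lambda=\mu\nu$. $\Lambda^n=d^{-1}(n)$, $\Lambda^0$ = vertices, $r,s$ range and source. Standing convention: $\Lambda^{e_i}\neq\emptyset$ for each $i$. Finite: each $\Lambda^n$ finite; strongly connected: $v\Lambda w\neq\emptyset$ for all vertices. Infinite paths: degree-preserving functors $x:\Omega_k\to\Lambda$, where $\Omega_k=\{(m,n)\in\mathbb{N}^k\times\mathbb{N}^k:m\le n\}$ with $r(m,n)=(m,m)$, $s(m,n)=(n,n)$, $(m,n)(n,p)=(m,p)$, $d(m,n)=n-m$; $\Lambda^\infty$ their set; $\sigma^n(x)(p,q)=x(n+p,n+q)$; $Z(v)=\{x\in\Lambda^\infty:x(0,0)=v\}$. $\Lambda$ is aperiodic if for each $v\in\Lambda^0$ there is $x\in Z(v)$ with $\sigma^m(x)\neq\sigma^n(x)$ for all $m\neq n$ in $\mathbb{N}^k$. $\operatorname{Per}\Lambda=\{m-n:m,n\in\mathbb{N}^k,\ \sigma^m(x)=\sigma^n(x)\ \forall x\in\Lambda^\infty\}$. *)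

theory Defs
  imports "HOL-Library.Countable_Set"
begin

text \<open>A k-graph, presented as a one-sorted small category: a set of morphisms,
  range and source maps (whose values are the identity morphisms = vertices),
  composition (meaningful on composable pairs: src mu = rng nu), and a degree map
  into N^k, where N^k is rendered as 'k \<Rightarrow> nat for a finite index type 'k
  (so k = CARD('k)).\<close>

record ('a, 'k) kgraph =
  mor :: "'a set"
  rng :: "'a \<Rightarrow> 'a"
  src :: "'a \<Rightarrow> 'a"
  cmp :: "'a \<Rightarrow> 'a \<Rightarrow> 'a"
  deg :: "'a \<Rightarrow> 'k \<Rightarrow> nat"

definition vertices :: "('a, 'k) kgraph \<Rightarrow> 'a set" where
  "vertices G = {v \<in> mor G. rng G v = v \<and> src G v = v}"

definition k_graph :: "('a, 'k::finite) kgraph \<Rightarrow> bool" where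
  "k_graph G \<longleftrightarrow>
     countable (mor G)
   \<and> (\<forall>l\<in>mor G. rng G l \<in> vertices G \<and> src G l \<in> vertices G)
   \<and> (\<forall>l\<in>mor G. cmp G (rng G l) l = l \<and> cmp G l (src G l) = l)
   \<and> (\<forall>mu\<in>mor G. \<forall>nu\<in>mor G. src G mu = rng G nu \<longrightarrow>
        cmp G mu nu \<in> mor G \<and> rng G (cmp G mu nu) = rng G mu \<and> src G (cmp G mu nu) = src G nu)
   \<and> (\<forall>a\<in>mor G. \<forall>b\<in>mor G. \<forall>c\<in>mor G. src G a = rng G b \<longrightarrow> src G b = rng G c \<longrightarrow>
        cmp G (cmp G a b) c = cmp G a (cmp G b c))
   \<and> (\<forall>v\<in>vertices G. deg G v = (\<lambda>_. 0))
   \<and> (\<forall>mu\<in>mor G. \<forall>nu\<in>mor G. src G mu = rng G nu \<longrightarrow>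
        deg G (cmp G mu nu) = (\<lambda>i. deg G mu i + deg G nu i))
   \<and> (\<forall>l\<in>mor G. \<forall>m n. deg G l = (\<lambda>i. m i + n i) \<longrightarrow>
        (\<exists>!p. fst p \<in> mor G \<and> snd p \<in> mor G \<and> src G (fst p) = rng G (snd p)
              \<and> deg G (fst p) = m \<and> deg G (snd p) = n \<and> l = cmp G (fst p) (snd p)))"

definition unit_vec :: "'k \<Rightarrow> 'k \<Rightarrow> nat" where
  "unit_vec i = (\<lambda>j. if j = i then 1 else 0)"

definition edges_nonempty :: "('a, 'k) kgraph \<Rightarrow> bool" where
  "edges_nonempty G \<longleftrightarrow> (\<forall>i. \<exists>l\<in>mor G. deg G l = unit_vec i)"

definition finite_kgraph :: "('a, 'k) kgraph \<Rightarrow> bool" where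
  "finite_kgraph G \<longleftrightarrow> (\<forall>n. finite {l \<in> mor G. deg G l = n})"

definition strongly_connected :: "('a, 'k) kgraph \<Rightarrow> bool" where
  "strongly_connected G \<longleftrightarrow>
     (\<forall>v\<in>vertices G. \<forall>w\<in>vertices G. \<exists>l\<in>mor G. rng G l = v \<and> src G l = w)"

text \<open>Infinite paths: degree-preserving functors Omega_k \<rightarrow> Lambda, where a morphism
  (m,n) of Omega_k (m \<le> n pointwise) is a pair; values off Omega_k are fixed to
  undefined so that paths are compared by ordinary function equality.\<close>
definition is_inf_path ::
    "('a, 'k) kgraph \<Rightarrow> (('k \<Rightarrow> nat) \<times> ('k \<Rightarrow> nat) \<Rightarrow> 'a) \<Rightarrow> bool" where
  "is_inf_path G x \<longleftrightarrow>
     (\<forall>m n. m \<le> n \<longrightarrow> x (m, n) \<in> mor G \<and> deg G (x (m, n)) = (\<lambda>i. n i - m i)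
        \<and> rng G (x (m, n)) = x (m, m) \<and> src G (x (m, n)) = x (n, n))
   \<and> (\<forall>m n p. m \<le> n \<longrightarrow> n \<le> p \<longrightarrow> cmp G (x (m, n)) (x (n, p)) = x (m, p))
   \<and> (\<forall>m n. \<not> m \<le> n \<longrightarrow> x (m, n) = undefined)"

definition inf_paths :: "('a, 'k) kgraph \<Rightarrow> (('k \<Rightarrow> nat) \<times> ('k \<Rightarrow> nat) \<Rightarrow> 'a) set" where
  "inf_paths G = {x. is_inf_path G x}"

definition shift :: "('k \<Rightarrow> nat) \<Rightarrow> (('k \<Rightarrow> nat) \<times> ('k \<Rightarrow> nat) \<Rightarrow> 'a)
    \<Rightarrow> (('k \<Rightarrow> nat) \<times> ('k \<Rightarrow> nat) \<Rightarrow> 'a)" where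
  "shift n x = (\<lambda>(p, q). x (\<lambda>i. n i + p i, \<lambda>i. n i + q i))"

definition cyl :: "('a, 'k) kgraph \<Rightarrow> 'a \<Rightarrow> (('k \<Rightarrow> nat) \<times> ('k \<Rightarrow> nat) \<Rightarrow> 'a) set" where
  "cyl G v = {x \<in> inf_paths G. x (\<lambda>_. 0, \<lambda>_. 0) = v}"

definition aperiodic :: "('a, 'k) kgraph \<Rightarrow> bool" where
  "aperiodic G \<longleftrightarrow>
     (\<forall>v\<in>vertices G. \<exists>x\<in>cyl G v. \<forall>m n. m \<noteq> n \<longrightarrow> shift m x \<noteq> shift n x)"

definition Per :: "('a, 'k) kgraph \<Rightarrow> ('k \<Rightarrow> int) set" where
  "Per G = {(\<lambda>i. int (m i) - int (n i)) | m n.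
              \<forall>x\<in>inf_paths G. shift m x = shift n x}"

end

theory Submission
  imports Defs
begin

locale kg =
  fixes G :: "('a, 'k::finite) kgraph"
  assumes kG: "k_graph G"
begin

lemma rng_v: "l \<in> mor G \<Longrightarrow> rng G l \<in> vertices G"
  using kG unfolding k_graph_def by blast
lemma src_v: "l \<in> mor G \<Longrightarrow> src G l \<in> vertices G"
  using kG unfolding k_graph_def by blast
lemma v_mor: "v \<in> vertices G \<Longrightarrow> v \<in> mor G" by (simp add: vertices_def)
lemma v_rng: "v \<in> vertices G \<Longrightarrow> rng G v = v" by (simp add: vertices_def)
lemma v_src: "v \<in> vertices G \<Longrightarrow> src G v = v" by (simp add: vertices_def)
lemma id_l: "l \<in> mor G \<Longrightarrow> cmp G (rng G l) l = l"
  using kG unfolding k_graph_def by blast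
lemma id_r: "l \<in> mor G \<Longrightarrow> cmp G l (src G l) = l"
  using kG unfolding k_graph_def by blast
lemma cmp_mor: "a \<in> mor G \<Longrightarrow> b \<in> mor G \<Longrightarrow> src G a = rng G b \<Longrightarrow> cmp G a b \<in> mor G"
  using kG unfolding k_graph_def by blast
lemma rng_cmp: "a \<in> mor G \<Longrightarrow> b \<in> mor G \<Longrightarrow> src G a = rng G b \<Longrightarrow> rng G (cmp G a b) = rng G a"
  using kG unfolding k_graph_def by blast
lemma src_cmp: "a \<in> mor G \<Longrightarrow> b \<in> mor G \<Longrightarrow> src G a = rng G b \<Longrightarrow> src G (cmp G a b) = src G b"
  using kG unfolding k_graph_def by blast
lemma assoc: "a \<in> mor G \<Longrightarrow> b \<in> mor G \<Longrightarrow> c \<in> mor G \<Longrightarrow> src G a = rng G b \<Longrightarrow> src G b = rng G c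
   \<Longrightarrow> cmp G (cmp G a b) c = cmp G a (cmp G b c)"
  using kG unfolding k_graph_def by blast
lemma deg_v: "v \<in> vertices G \<Longrightarrow> deg G v = (\<lambda>_. 0)"
  using kG unfolding k_graph_def by blast
lemma deg_cmp: "a \<in> mor G \<Longrightarrow> b \<in> mor G \<Longrightarrow> src G a = rng G b \<Longrightarrow> deg G (cmp G a b) = (\<lambda>i. deg G a i + deg G b i)"
  using kG unfolding k_graph_def by blast
lemma fact: "l \<in> mor G \<Longrightarrow> deg G l = (\<lambda>i. m i + n i) \<Longrightarrow>
        (\<exists>!p. fst p \<in> mor G \<and> snd p \<in> mor G \<and> src G (fst p) = rng G (snd p)
              \<and> deg G (fst p) = m \<and> deg G (snd p) = n \<and> l = cmp G (fst p) (snd p))"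
  using kG unfolding k_graph_def by blast

lemma uniq:
  assumes "a \<in> mor G" "b \<in> mor G" "a' \<in> mor G" "b' \<in> mor G"
    "src G a = rng G b" "src G a' = rng G b'" "deg G a = deg G a'" "cmp G a b = cmp G a' b'"
  shows "a = a' \<and> b = b'"
proof -
  define l where "l = cmp G a b"
  have lm: "l \<in> mor G" using assms cmp_mor l_def by auto
  have d1: "deg G l = (\<lambda>i. deg G a i + deg G b i)" unfolding l_def by (rule deg_cmp[OF assms(1,2,5)])
  have "deg G (cmp G a' b') = (\<lambda>i. deg G a' i + deg G b' i)" using assms deg_cmp by blast
  then have d2: "deg G l = (\<lambda>i. deg G a' i + deg G b' i)" using assms(8) l_def by simp
  have "deg G b = deg G b'"
  proof
    fix i show "deg G b i = deg G b' i" using fun_cong[OF d1, of i] fun_cong[OF d2, of i] assms(7) by simp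
  qed
  note E = fact[OF lm d1]
  have Q1: "fst (a, b) \<in> mor G \<and> snd (a, b) \<in> mor G \<and> src G (fst (a, b)) = rng G (snd (a, b))
              \<and> deg G (fst (a, b)) = deg G a \<and> deg G (snd (a, b)) = deg G b \<and> l = cmp G (fst (a, b)) (snd (a, b))"
    using assms l_def by simp
  have Q2: "fst (a', b') \<in> mor G \<and> snd (a', b') \<in> mor G \<and> src G (fst (a', b')) = rng G (snd (a', b'))
              \<and> deg G (fst (a', b')) = deg G a \<and> deg G (snd (a', b')) = deg G b \<and> l = cmp G (fst (a', b')) (snd (a', b'))"
    using assms l_def \<open>deg G b = deg G b'\<close> by simp
  have "(a, b) = (a', b')" using the1_equality[OF E Q1] the1_equality[OF E Q2] by simp
  then show ?thesis by simp
qed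

definition spl :: "'a \<Rightarrow> ('k \<Rightarrow> nat) \<Rightarrow> 'a \<times> 'a" where
  "spl l m = (THE p. fst p \<in> mor G \<and> snd p \<in> mor G \<and> src G (fst p) = rng G (snd p)
              \<and> deg G (fst p) = m \<and> deg G (snd p) = (\<lambda>i. deg G l i - m i) \<and> l = cmp G (fst p) (snd p))"

lemma spl_prop:
  assumes "l \<in> mor G" "m \<le> deg G l"
  shows "fst (spl l m) \<in> mor G \<and> snd (spl l m) \<in> mor G \<and> src G (fst (spl l m)) = rng G (snd (spl l m))
              \<and> deg G (fst (spl l m)) = m \<and> deg G (snd (spl l m)) = (\<lambda>i. deg G l i - m i) \<and> l = cmp G (fst (spl l m)) (snd (spl l m))"
proof -
  have "deg G l = (\<lambda>i. m i + (deg G l i - m i))"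
    using assms(2) by (auto simp: le_fun_def)
  from theI'[OF fact[OF assms(1) this]] show ?thesis unfolding spl_def by blast
qed

lemma spl_eq:
  assumes "a \<in> mor G" "b \<in> mor G" "src G a = rng G b"
  shows "spl (cmp G a b) (deg G a) = (a, b)"
proof -
  have l: "cmp G a b \<in> mor G" using assms cmp_mor by auto
  have d: "deg G (cmp G a b) = (\<lambda>i. deg G a i + deg G b i)" using assms deg_cmp by auto
  have d2: "deg G b = (\<lambda>i. deg G (cmp G a b) i - deg G a i)" using d by auto
  have d': "deg G (cmp G a b) = (\<lambda>i. deg G a i + (deg G (cmp G a b) i - deg G a i))" using d by auto
  show ?thesis unfolding spl_def
    apply (rule the1_equality)
     apply (rule fact[OF l d'])
    using assms d2 by auto
qed

lemma spl_self: "l \<in> mor G \<Longrightarrow> spl l (deg G l) = (l, src G l)"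
  using spl_eq[of l "src G l"] id_r src_v v_mor v_rng by auto

lemma spl_zero: "l \<in> mor G \<Longrightarrow> spl l (\<lambda>_. 0) = (rng G l, l)"
  using spl_eq[of "rng G l" l] id_l rng_v v_mor v_src deg_v by auto

lemma pfx_cmp:
  assumes "l \<in> mor G" "b \<in> mor G" "src G l = rng G b" "m \<le> deg G l"
  shows "fst (spl (cmp G l b) m) = fst (spl l m)"
proof -
  note P = spl_prop[OF assms(1,4)]
  define x where "x = fst (spl l m)"
  define y where "y = snd (spl l m)"
  have xy: "x \<in> mor G" "y \<in> mor G" "src G x = rng G y" "deg G x = m" "l = cmp G x y"
    using P x_def y_def by auto
  have sy: "src G y = rng G b" using src_cmp[OF xy(1,2,3)] xy(5) assms(3) by simp
  have "cmp G l b = cmp G x (cmp G y b)" using assoc[OF xy(1,2) assms(2) xy(3) sy] xy(5) by simp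
  moreover have "spl (cmp G x (cmp G y b)) (deg G x) = (x, cmp G y b)"
    by (rule spl_eq[OF xy(1) cmp_mor[OF xy(2) assms(2) sy]]) (simp add: rng_cmp[OF xy(2) assms(2) sy] xy(3))
  ultimately have "spl (cmp G l b) m = (x, cmp G y b)" using xy(4) by simp
  then show ?thesis using x_def by simp
qed

lemma pfx_pfx:
  assumes "l \<in> mor G" "m \<le> n" "n \<le> deg G l"
  shows "fst (spl (fst (spl l n)) m) = fst (spl l m)"
proof -
  note P = spl_prop[OF assms(1,3)]
  have a: "fst (spl l n) \<in> mor G" "snd (spl l n) \<in> mor G" "src G (fst (spl l n)) = rng G (snd (spl l n))"
     "m \<le> deg G (fst (spl l n))" "l = cmp G (fst (spl l n)) (snd (spl l n))" using P assms(2) by auto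
  have "fst (spl (cmp G (fst (spl l n)) (snd (spl l n))) m) = fst (spl (fst (spl l n)) m)"
    by (rule pfx_cmp[OF a(1-4)])
  then show ?thesis using a(5) by simp
qed


definition pth :: "(('k \<Rightarrow> nat) \<Rightarrow> 'a) \<Rightarrow> ('k \<Rightarrow> nat) \<times> ('k \<Rightarrow> nat) \<Rightarrow> 'a" where
  "pth f = (\<lambda>(m, n). if m \<le> n then snd (spl (f n) m) else undefined)"

lemma pth_inf:
  assumes F1: "\<And>n. f n \<in> mor G" and F2: "\<And>n. deg G (f n) = n"
    and F3: "\<And>m n. m \<le> n \<Longrightarrow> fst (spl (f n) m) = f m"
  shows "is_inf_path G (pth f)" and "\<And>n. pth f (\<lambda>_. 0, n) = f n"
proof -
  have P: "snd (spl (f n) m) \<in> mor G \<and> deg G (snd (spl (f n) m)) = (\<lambda>i. n i - m i)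
     \<and> src G (f m) = rng G (snd (spl (f n) m)) \<and> f n = cmp G (f m) (snd (spl (f n) m))"
    if "m \<le> n" for m n
    using spl_prop[OF F1, of m n] F2 F3[OF that] that by auto
  have D: "pth f (m, m) = src G (f m)" for m
    using spl_self[OF F1, of m] F2 by (simp add: pth_def)
  have S: "src G (snd (spl (f n) m)) = src G (f n)" if "m \<le> n" for m n
    using P[OF that] src_cmp[OF F1[of m], of "snd (spl (f n) m)"] by simp
  show "\<And>n. pth f (\<lambda>_. 0, n) = f n"
    using spl_zero[OF F1] by (simp add: pth_def le_fun_def)
  show "is_inf_path G (pth f)"
    unfolding is_inf_path_def
  proof (intro conjI allI impI)
    fix m n :: "'k \<Rightarrow> nat" assume mn: "m \<le> n"
    show "pth f (m, n) \<in> mor G" "deg G (pth f (m, n)) = (\<lambda>i. n i - m i)"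
      "rng G (pth f (m, n)) = pth f (m, m)" "src G (pth f (m, n)) = pth f (n, n)"
      using P[OF mn] S[OF mn] D mn by (auto simp: pth_def)
  next
    fix m n p :: "'k \<Rightarrow> nat" assume mn: "m \<le> n" and np: "n \<le> p"
    have mp: "m \<le> p" using mn np order_trans by blast
    define s1 where "s1 = snd (spl (f n) m)"
    define s2 where "s2 = snd (spl (f p) n)"
    define s3 where "s3 = snd (spl (f p) m)"
    have A: "s1 \<in> mor G" "src G (f m) = rng G s1" "f n = cmp G (f m) s1" using P[OF mn] s1_def by auto
    have B: "s2 \<in> mor G" "src G (f n) = rng G s2" "f p = cmp G (f n) s2" using P[OF np] s2_def by auto
    have C: "s3 \<in> mor G" "src G (f m) = rng G s3" "f p = cmp G (f m) s3" using P[OF mp] s3_def by auto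
    have s1s: "src G s1 = rng G s2" using S[OF mn] B(2) s1_def by simp
    have "f p = cmp G (f m) (cmp G s1 s2)" using A(3) B(3) assoc[OF F1 A(1) B(1) A(2) s1s] by simp
    moreover have "src G (f m) = rng G (cmp G s1 s2)" using rng_cmp[OF A(1) B(1) s1s] A(2) by simp
    ultimately have "s3 = cmp G s1 s2"
      using uniq[OF F1 C(1) F1 cmp_mor[OF A(1) B(1) s1s] C(2)] C(3) by simp
    then show "cmp G (pth f (m, n)) (pth f (n, p)) = pth f (m, p)"
      using mn np mp s1_def s2_def s3_def by (simp add: pth_def)
  next
    fix m n :: "'k \<Rightarrow> nat" assume "\<not> m \<le> n"
    then show "pth f (m, n) = undefined" by (simp add: pth_def)
  qed
qed

lemma path_basic:
  assumes "is_inf_path G y" "m \<le> n"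
  shows "y (m, n) \<in> mor G" "deg G (y (m, n)) = (\<lambda>i. n i - m i)"
    "rng G (y (m, n)) = y (m, m)" "src G (y (m, n)) = y (n, n)"
  using assms unfolding is_inf_path_def by blast+

lemma path_cmp:
  assumes "is_inf_path G y" "m \<le> n" "n \<le> p"
  shows "cmp G (y (m, n)) (y (n, p)) = y (m, p)"
  using assms unfolding is_inf_path_def by blast

lemma path_undef:
  assumes "is_inf_path G y" "\<not> m \<le> n"
  shows "y (m, n) = undefined"
  using assms unfolding is_inf_path_def by blast

lemma path_spl:
  assumes "is_inf_path G y" "a \<le> b" "b \<le> c"
  shows "spl (y (a, c)) (\<lambda>i. b i - a i) = (y (a, b), y (b, c))"
proof -
  have "spl (cmp G (y (a, b)) (y (b, c))) (deg G (y (a, b))) = (y (a, b), y (b, c))"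
    using spl_eq[OF path_basic(1)[OF assms(1,2)] path_basic(1)[OF assms(1,3)]]
      path_basic(4)[OF assms(1,2)] path_basic(3)[OF assms(1,3)] by simp
  then show ?thesis using path_cmp[OF assms] path_basic[OF assms(1,2)] by simp
qed

lemma path_spl0:
  assumes "is_inf_path G y" "b \<le> c"
  shows "spl (y (\<lambda>_. 0, c)) b = (y (\<lambda>_. 0, b), y (b, c))"
  using path_spl[OF assms(1) _ assms(2), of "\<lambda>_. 0"] by (simp add: le_fun_def)

lemma path_det:
  assumes "is_inf_path G y" "is_inf_path G y'" "y (\<lambda>_. 0, N) = y' (\<lambda>_. 0, N)" "a \<le> b" "b \<le> N"
  shows "y (a, b) = y' (a, b)"
proof -
  have aN: "a \<le> N" using assms order_trans by blast
  have "y (a, N) = y' (a, N)" using path_spl0[OF assms(1) aN] path_spl0[OF assms(2) aN] assms(3) by simp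
  then show ?thesis using path_spl[OF assms(1,4,5)] path_spl[OF assms(2,4,5)] by simp
qed

lemma shift_comm: "shift a (shift b y) = shift b (shift a y)"
  unfolding shift_def by (auto simp: fun_eq_iff add_ac)

lemma concat:
  assumes al: "\<alpha> \<in> mor G" and x: "is_inf_path G x" and sx: "src G \<alpha> = x (\<lambda>_. 0, \<lambda>_. 0)"
  shows "\<exists>y. is_inf_path G y \<and> shift (deg G \<alpha>) y = x \<and> y (\<lambda>_. 0, deg G \<alpha>) = \<alpha>"
proof -
  define z :: "'k \<Rightarrow> nat" where "z = (\<lambda>_. 0)"
  define D where "D = deg G \<alpha>"
  have X: "x (z, n) \<in> mor G" "deg G (x (z, n)) = n" "rng G (x (z, n)) = src G \<alpha>" for n
    using path_basic[OF x, of z n] sx by (auto simp: z_def le_fun_def)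
  define f where "f n = fst (spl (cmp G \<alpha> (x (z, n))) n)" for n
  have L: "cmp G \<alpha> (x (z, n)) \<in> mor G" "deg G (cmp G \<alpha> (x (z, n))) = (\<lambda>i. D i + n i)" for n
    using cmp_mor deg_cmp al X D_def by auto
  have Ln: "n \<le> deg G (cmp G \<alpha> (x (z, n)))" for n using L by (auto simp: le_fun_def)
  have F1: "f n \<in> mor G" "deg G (f n) = n" for n using spl_prop[OF L(1) Ln] f_def by auto
  have zle: "z \<le> m" for m by (simp add: z_def le_fun_def)
  have key: "cmp G \<alpha> (x (z, n)) = cmp G (cmp G \<alpha> (x (z, m))) (x (m, n))" if "m \<le> n" for m n
  proof -
    have "x (z, n) = cmp G (x (z, m)) (x (m, n))" using path_cmp[OF x zle that] by simp
    moreover have "src G (x (z, m)) = rng G (x (m, n))"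
      using path_basic[OF x zle] path_basic[OF x that] by simp
    ultimately show ?thesis using assoc[OF al X(1) path_basic(1)[OF x that] X(3)[symmetric]] by simp
  qed
  have key2: "src G (cmp G \<alpha> (x (z, m))) = rng G (x (m, n))" if "m \<le> n" for m n
    using src_cmp[OF al X(1) X(3)[symmetric]] path_basic(4)[OF x zle] path_basic(3)[OF x that] by simp
  have F3: "fst (spl (f n) m) = f m" if "m \<le> n" for m n
  proof -
    have "fst (spl (f n) m) = fst (spl (cmp G \<alpha> (x (z, n))) m)"
      unfolding f_def using pfx_pfx[OF L(1) that Ln] .
    also have "\<dots> = fst (spl (cmp G \<alpha> (x (z, m))) m)"
      unfolding key[OF that] using pfx_cmp[OF L(1) path_basic(1)[OF x that] key2[OF that] Ln] .
    finally show ?thesis unfolding f_def .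
  qed
  define y where "y = pth f"
  have yi: "is_inf_path G y" using pth_inf(1)[OF F1 F3] y_def by auto
  have y0: "y (z, n) = f n" for n using pth_inf(2)[OF F1 F3] y_def z_def by auto
  have fD: "f (\<lambda>i. D i + q i) = cmp G \<alpha> (x (z, q))" for q
  proof -
    have qq: "q \<le> (\<lambda>i. D i + q i)" by (simp add: le_fun_def)
    have "f (\<lambda>i. D i + q i) = fst (spl (cmp G \<alpha> (x (z, q))) (\<lambda>i. D i + q i))"
      unfolding f_def key[OF qq]
      using pfx_cmp[OF L(1) path_basic(1)[OF x qq] key2[OF qq]] L(2) by (simp add: le_fun_def)
    also have "\<dots> = cmp G \<alpha> (x (z, q))" using spl_self[OF L(1)] L(2) by simp
    finally show ?thesis .
  qed
  have "shift D y = x"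
  proof -
    have "y (\<lambda>i. D i + p i, \<lambda>i. D i + q i) = x (p, q)" for p q
    proof (cases "p \<le> q")
      case True
      have e: "cmp G \<alpha> (x (z, q)) = cmp G (cmp G \<alpha> (x (z, p))) (x (p, q))" using key[OF True] .
      have "spl (cmp G (cmp G \<alpha> (x (z, p))) (x (p, q))) (deg G (cmp G \<alpha> (x (z, p)))) = (cmp G \<alpha> (x (z, p)), x (p, q))"
        using spl_eq[OF L(1) path_basic(1)[OF x True] key2[OF True]] .
      then have "snd (spl (cmp G \<alpha> (x (z, q))) (\<lambda>i. D i + p i)) = x (p, q)" using e L(2) by simp
      moreover have "(\<lambda>i. D i + p i) \<le> (\<lambda>i. D i + q i)" using True by (simp add: le_fun_def)
      ultimately show ?thesis using fD y_def by (simp add: pth_def)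
    next
      case False
      then have "\<not> (\<lambda>i. D i + p i) \<le> (\<lambda>i. D i + q i)" by (simp add: le_fun_def)
      then show ?thesis using False path_undef[OF x] path_undef[OF yi] by simp
    qed
    then show ?thesis unfolding shift_def by (auto simp: fun_eq_iff)
  qed
  moreover have "y (z, D) = \<alpha>"
  proof -
    have "y (z, D) = fst (spl (cmp G \<alpha> (x (z, D))) D)" using y0 f_def by simp
    also have "\<dots> = \<alpha>" using spl_eq[OF al X(1) X(3)[symmetric]] D_def by simp
    finally show ?thesis .
  qed
  ultimately show ?thesis using yi D_def z_def by auto
qed


lemma shift_app: "shift m y (p, q) = y (\<lambda>i. m i + p i, \<lambda>i. m i + q i)"
  by (simp add: shift_def)

lemma step:
  assumes SC: "strongly_connected G" and P: "Per G = {(\<lambda>_. 0)}" and l: "l \<in> mor G" and mn: "m \<noteq> n"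
  shows "\<exists>l'\<in>mor G. deg G l \<le> deg G l' \<and> fst (spl l' (deg G l)) = l \<and> c \<le> deg G l'
     \<and> (\<forall>y. is_inf_path G y \<and> y (\<lambda>_. 0, deg G l') = l' \<longrightarrow> shift m y \<noteq> shift n y)"
proof -
  define z :: "'k \<Rightarrow> nat" where "z = (\<lambda>_. 0)"
  have zle: "z \<le> a" for a by (simp add: z_def le_fun_def)
  obtain x where x: "is_inf_path G x" "shift m x \<noteq> shift n x"
  proof (rule ccontr)
    assume "\<not> thesis"
    then have "\<forall>x\<in>inf_paths G. shift m x = shift n x" using that by (auto simp: inf_paths_def)
    then have "(\<lambda>i. int (m i) - int (n i)) \<in> Per G" unfolding Per_def by blast
    then have "(\<lambda>i. int (m i) - int (n i)) = (\<lambda>_. 0)" using P by blast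
    then have "m = n" by (auto simp: fun_eq_iff dest: fun_cong)
    then show False using mn by simp
  qed
  have u: "x (z, z) \<in> vertices G" using path_basic[OF x(1) zle[of z]] by (simp add: vertices_def)
  obtain \<mu> where mu: "\<mu> \<in> mor G" "rng G \<mu> = src G l" "src G \<mu> = x (z, z)"
    using SC src_v[OF l] u unfolding strongly_connected_def by blast
  define \<alpha> where "\<alpha> = cmp G l \<mu>"
  have al: "\<alpha> \<in> mor G" "src G \<alpha> = x (z, z)" "deg G \<alpha> = (\<lambda>i. deg G l i + deg G \<mu> i)"
    using cmp_mor src_cmp deg_cmp l mu \<alpha>_def by auto
  define D where "D = deg G \<alpha>"
  obtain y where y: "is_inf_path G y" "shift D y = x" "y (z, D) = \<alpha>"
    using concat[OF al(1) x(1)] al(2) D_def z_def by auto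
  have "shift m y \<noteq> shift n y"
  proof
    assume e: "shift m y = shift n y"
    have "shift m x = shift m (shift D y)" using y(2) by simp
    also have "\<dots> = shift D (shift m y)" by (rule shift_comm)
    also have "\<dots> = shift D (shift n y)" using e by simp
    also have "\<dots> = shift n (shift D y)" by (rule shift_comm)
    also have "\<dots> = shift n x" using y(2) by simp
    finally show False using x(2) by simp
  qed
  then obtain pq where "shift m y pq \<noteq> shift n y pq" by (auto simp: fun_eq_iff)
  then obtain p q where pq: "y (\<lambda>i. m i + p i, \<lambda>i. m i + q i) \<noteq> y (\<lambda>i. n i + p i, \<lambda>i. n i + q i)"
    by (cases pq) (auto simp: shift_app)
  have "p \<le> q"
  proof (rule ccontr)
    assume "\<not> p \<le> q"
    then have "\<not> (\<lambda>i. m i + p i) \<le> (\<lambda>i. m i + q i)" "\<not> (\<lambda>i. n i + p i) \<le> (\<lambda>i. n i + q i)"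
      by (auto simp: le_fun_def)
    then show False using pq path_undef[OF y(1)] by simp
  qed
  define N where "N = (\<lambda>i. D i + m i + n i + q i + c i)"
  define l' where "l' = y (z, N)"
  have cN: "c \<le> N" by (simp add: N_def le_fun_def)
  have l'm: "l' \<in> mor G" "deg G l' = N" using path_basic[OF y(1) zle[of N]] l'_def by (auto simp: z_def)
  have dl: "deg G l \<le> D" "D \<le> N" using al(3) D_def N_def by (auto simp: le_fun_def)
  have "fst (spl l' (deg G l)) = y (z, deg G l)"
    using path_spl0[OF y(1) order_trans[OF dl]] l'_def z_def by simp
  also have "\<dots> = fst (spl (y (z, D)) (deg G l))"
    using path_spl0[OF y(1) dl(1)] z_def by simp
  also have "\<dots> = l" using y(3) spl_eq[OF l mu(1) mu(2)[symmetric]] \<alpha>_def by simp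
  finally have ext: "fst (spl l' (deg G l)) = l" .
  have kill: "shift m y' \<noteq> shift n y'" if y': "is_inf_path G y'" "y' (z, N) = l'" for y'
  proof -
    have "y' (\<lambda>i. m i + p i, \<lambda>i. m i + q i) = y (\<lambda>i. m i + p i, \<lambda>i. m i + q i)"
      apply (rule path_det[OF y'(1) y(1), of N])
      using y'(2) l'_def \<open>p \<le> q\<close> z_def by (auto simp: le_fun_def N_def)
    moreover have "y' (\<lambda>i. n i + p i, \<lambda>i. n i + q i) = y (\<lambda>i. n i + p i, \<lambda>i. n i + q i)"
      apply (rule path_det[OF y'(1) y(1), of N])
      using y'(2) l'_def \<open>p \<le> q\<close> z_def by (auto simp: le_fun_def N_def)
    ultimately have "shift m y' (p, q) \<noteq> shift n y' (p, q)" using pq by (simp add: shift_app)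
    then show ?thesis by auto
  qed
  show ?thesis
    apply (rule bexI[of _ l'])
    using l'm order_trans[OF dl] ext kill z_def cN by auto
qed

end

theorem proposition5p4:
  fixes G :: "('a, 'k::finite) kgraph"
  assumes "k_graph G"
    and "edges_nonempty G"
    and "finite_kgraph G"
    and "strongly_connected G"
  shows "aperiodic G \<longleftrightarrow> Per G = {(\<lambda>_. 0)}"
proof -
  interpret kg G using assms(1) by unfold_locales
  show ?thesis
  proof
    assume ap: "aperiodic G"
    show "Per G = {(\<lambda>_. 0)}"
    proof
      show "Per G \<subseteq> {(\<lambda>_. 0)}"
      proof
        fix d assume "d \<in> Per G"
        then obtain m n where d: "d = (\<lambda>i. int (m i) - int (n i))"
          and all: "\<forall>x\<in>inf_paths G. shift m x = shift n x" unfolding Per_def by blast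
        obtain l where l: "l \<in> mor G" using assms(2) unfolding edges_nonempty_def by blast
        have "m = n"
        proof (rule ccontr)
          assume "m \<noteq> n"
          obtain x where "x \<in> cyl G (rng G l)" "\<forall>m n. m \<noteq> n \<longrightarrow> shift m x \<noteq> shift n x"
            using ap rng_v[OF l] unfolding aperiodic_def by blast
          then show False using all \<open>m \<noteq> n\<close> unfolding cyl_def by blast
        qed
        then show "d \<in> {(\<lambda>_. 0)}" using d by simp
      qed
    next
      have "(\<lambda>_. 0::int) \<in> Per G" unfolding Per_def
        by (rule CollectI, rule exI[of _ "\<lambda>_. 0::nat"], rule exI[of _ "\<lambda>_. 0::nat"]) simp
      then show "{(\<lambda>_. 0)} \<subseteq> Per G" by simp
    qed
  next
    assume P: "Per G = {(\<lambda>_. 0)}"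
    show "aperiodic G" unfolding aperiodic_def
    proof
      fix v assume v: "v \<in> vertices G"
      let ?fn = "from_nat :: nat \<Rightarrow> ('k \<Rightarrow> nat) \<times> ('k \<Rightarrow> nat)"
      define Q where "Q = (\<lambda>l j l'. l' \<in> mor G \<and> deg G l \<le> deg G l' \<and> fst (spl l' (deg G l)) = l
          \<and> (\<lambda>_. Suc j) \<le> deg G l' \<and> (fst (?fn j) \<noteq> snd (?fn j) \<longrightarrow>
             (\<forall>y. is_inf_path G y \<and> y (\<lambda>_. 0, deg G l') = l' \<longrightarrow> shift (fst (?fn j)) y \<noteq> shift (snd (?fn j)) y)))"
      have ex: "\<forall>p. \<exists>l'. fst p \<in> mor G \<longrightarrow> Q (fst p) (snd p) l'"
      proof
        fix p :: "'a \<times> nat"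
        obtain l j where p: "p = (l, j)" by (cases p)
        show "\<exists>l'. fst p \<in> mor G \<longrightarrow> Q (fst p) (snd p) l'"
        proof (cases "fst (?fn j) \<noteq> snd (?fn j) \<and> l \<in> mor G")
          case True
          then show ?thesis using step[OF assms(4) P, of l "fst (?fn j)" "snd (?fn j)" "\<lambda>_. Suc j"] p
            unfolding Q_def by auto
        next
          case False
          have ne: "(\<lambda>_. 0::nat) \<noteq> ((\<lambda>_. 1) :: 'k \<Rightarrow> nat)" by (auto simp: fun_eq_iff)
          show ?thesis
          proof (cases "l \<in> mor G")
            case True
            then show ?thesis using step[OF assms(4) P True ne, of "\<lambda>_. Suc j"] p False
              unfolding Q_def by auto
          qed (use p in auto)
        qed
      qed
      then obtain nx where nx: "\<forall>p. fst p \<in> mor G \<longrightarrow> Q (fst p) (snd p) (nx p)"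
        using choice[OF ex] by blast
      define sq where "sq = rec_nat v (\<lambda>j l. nx (l, j))"
      have sq0: "sq 0 = v" and sqS: "sq (Suc j) = nx (sq j, j)" for j by (simp_all add: sq_def)
      have vm: "v \<in> mor G" "deg G v = (\<lambda>_. 0)" using v v_mor deg_v by auto
      have sm: "sq j \<in> mor G \<and> (\<lambda>_. j) \<le> deg G (sq j)" for j
      proof (induction j)
        case 0 then show ?case using vm sq0 by simp
      next
        case (Suc j) then show ?case using nx[rule_format, of "(sq j, j)"] sqS unfolding Q_def by auto
      qed
      have QS: "Q (sq j) j (sq (Suc j))" for j using nx[rule_format, of "(sq j, j)"] sqS sm by auto
      have ext: "deg G (sq i) \<le> deg G (sq j) \<and> fst (spl (sq j) (deg G (sq i))) = sq i" if "i \<le> j" for i j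
        using that
      proof (induction j rule: dec_induct)
        case base then show ?case using spl_self sm by simp
      next
        case (step j)
        have a: "deg G (sq j) \<le> deg G (sq (Suc j))" "fst (spl (sq (Suc j)) (deg G (sq j))) = sq j"
          using QS[of j] unfolding Q_def by auto
        have "fst (spl (sq (Suc j)) (deg G (sq i))) = fst (spl (fst (spl (sq (Suc j)) (deg G (sq j)))) (deg G (sq i)))"
          using pfx_pfx[of "sq (Suc j)" "deg G (sq i)" "deg G (sq j)"] sm step.IH a by simp
        then show ?case using a step.IH order_trans by (metis)
      qed
      define J where "J n = (\<Sum>i\<in>UNIV. n i)" for n :: "'k \<Rightarrow> nat"
      have Jle: "n i \<le> J n" for n i unfolding J_def by (rule member_le_sum) auto
      have nle: "n \<le> deg G (sq (J n))" for n
        using Jle sm unfolding le_fun_def by (meson order_trans)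
      define f where "f n = fst (spl (sq (J n)) n)" for n
      have F: "f n \<in> mor G" "deg G (f n) = n" for n using spl_prop[OF _ nle] sm f_def by auto
      have F3: "fst (spl (f n) m) = f m" if mn: "m \<le> n" for m n
      proof -
        have JJ: "J m \<le> J n" unfolding J_def using mn by (intro sum_mono) (auto simp: le_fun_def)
        note e = ext[OF JJ]
        have "fst (spl (f n) m) = fst (spl (sq (J n)) m)"
          unfolding f_def using pfx_pfx[OF _ mn nle] sm by auto
        also have "\<dots> = fst (spl (fst (spl (sq (J n)) (deg G (sq (J m))))) m)"
          using pfx_pfx[of "sq (J n)" m "deg G (sq (J m))"] sm nle e by simp
        also have "\<dots> = f m" using e f_def by simp
        finally show ?thesis .
      qed
      define x where "x = pth f"
      have xi: "is_inf_path G x" using pth_inf(1)[OF F F3] x_def by simp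
      have x0: "x (\<lambda>_. 0, n) = f n" for n using pth_inf(2)[OF F F3] x_def by simp
      have rv: "rng G (sq j) = v" for j
        using ext[of 0 j] sq0 vm spl_zero[of "sq j"] sm by simp
      have "x (\<lambda>_. 0, \<lambda>_. 0) = v" using x0 f_def spl_zero sm rv by simp
      then have xc: "x \<in> cyl G v" using xi by (simp add: cyl_def inf_paths_def)
      have "\<forall>m n. m \<noteq> n \<longrightarrow> shift m x \<noteq> shift n x"
      proof (intro allI impI)
        fix m n :: "'k \<Rightarrow> nat" assume mn: "m \<noteq> n"
        define j where "j = to_nat (m, n)"
        have fj: "?fn j = (m, n)" using j_def by simp
        define L where "L = sq (Suc j)"
        have QL: "\<forall>y. is_inf_path G y \<and> y (\<lambda>_. 0, deg G L) = L \<longrightarrow> shift m y \<noteq> shift n y"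
          using QS[of j] fj mn unfolding Q_def L_def by auto
        have "Suc j \<le> J (deg G L)"
          using QS[of j] Jle[of "deg G L" undefined] unfolding Q_def L_def le_fun_def by (meson order_trans)
        then have "fst (spl (sq (J (deg G L))) (deg G L)) = L" using ext L_def by blast
        then have "x (\<lambda>_. 0, deg G L) = L" using x0 f_def by simp
        then show "shift m x \<noteq> shift n x" using QL xi by blast
      qed
      then show "\<exists>x\<in>cyl G v. \<forall>m n. m \<noteq> n \<longrightarrow> shift m x \<noteq> shift n x" using xc by blast
    qed
  qed
qed

end
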